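(* Let $n,m_1,\dots,m_n,M\in\mathbb{N}$, let $L=\mathrm{lcm}(m_1,\dots,m_n)$, and write $M=Lk+l$ with $k,l\in\mathbb{Z}^{\ge0}$, $l<L$, and $(n+1)L-(1+m_1+\dots+m_n)=LN+N'$ with $N,N'\in\mathbb{Z}^{\ge0}$, $N'<L$. Then the number of solutions of $$a_0+m_1a_1+\dots+m_na_n=M,\qquad a_0,\dots,a_n\in\mathbb{Z}^{\ge0},$$ equals $\sum_{i=0}^{N} d_{li}\binom{n-i+k}{n}$, where $d_{li}$ denotes the number of solutions of $$l_0+m_1l_1+\dots+m_nl_n=Li+l,\quad l_0\in\{0,\dots,L-1\},\ l_j\in\{0,\dots,L/m_j-1\}\ (j=1,\dots,n).$$
   Context: $\binom{a}{b}$ denotes the binomial coefficient, taken to be $0$ when $0\le a<b$. *)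

theory Defs
  imports Main
begin

definition num_solutions :: "nat \<Rightarrow> (nat \<Rightarrow> nat) \<Rightarrow> nat \<Rightarrow> nat" where
  "num_solutions n m M =
     card {a :: nat \<Rightarrow> nat. (\<forall>j>n. a j = 0) \<and> a 0 + (\<Sum>j=1..n. m j * a j) = M}"

definition d_coeff :: "nat \<Rightarrow> (nat \<Rightarrow> nat) \<Rightarrow> nat \<Rightarrow> nat \<Rightarrow> nat \<Rightarrow> nat" where
  "d_coeff n m L l i =
     card {v :: nat \<Rightarrow> nat. (\<forall>j>n. v j = 0) \<and> v 0 < L \<and> (\<forall>j\<in>{1..n}. v j < L div m j)
            \<and> v 0 + (\<Sum>j=1..n. m j * v j) = L * i + l}"

end

theory Submission
  imports Defs
begin

lemma sum_split0: "(\<Sum>j\<le>n. f j) = f 0 + (\<Sum>j=1..n. (f j::nat))" for n :: nat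
proof -
  have "{..n} = insert 0 {1..n}" by auto
  then show ?thesis by simp
qed

lemma Qcard: "card {q::nat\<Rightarrow>nat. (\<forall>j>n. q j = 0) \<and> (\<Sum>j\<le>n. q j) = s} = (s + n) choose n"
proof -
  let ?Q = "{q::nat\<Rightarrow>nat. (\<forall>j>n. q j = 0) \<and> (\<Sum>j\<le>n. q j) = s}"
  let ?Lst = "{l::nat list. size l = Suc n \<and> sum_list l = s}"
  have "bij_betw (\<lambda>q. map q [0..<Suc n]) ?Q ?Lst"
  proof (rule bij_betw_byWitness[where f'="\<lambda>l j. if j \<le> n then l!j else 0"])
    show "\<forall>q\<in>?Q. (\<lambda>j. if j \<le> n then map q [0..<Suc n] ! j else 0) = q"
    proof
      fix q assume "q \<in> ?Q"
      then show "(\<lambda>j. if j \<le> n then map q [0..<Suc n] ! j else 0) = q"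
        by (auto simp: fun_eq_iff nth_map less_Suc_eq_le simp del: upt_Suc)
    qed
    show "\<forall>l\<in>?Lst. map (\<lambda>j. if j \<le> n then l!j else 0) [0..<Suc n] = l"
      by (auto intro!: nth_equalityI simp del: upt_Suc)
    show "(\<lambda>q. map q [0..<Suc n]) ` ?Q \<subseteq> ?Lst"
    proof
      fix x assume "x \<in> (\<lambda>q. map q [0..<Suc n]) ` ?Q"
      then obtain q where q: "q \<in> ?Q" "x = map q [0..<Suc n]" by blast
      have "sum_list (map q [0..<Suc n]) = sum q {..n}"
        by (metis sum_set_upt_conv_sum_list_nat set_upt atLeast0LessThan lessThan_Suc_atMost)
      with q show "x \<in> ?Lst" by simp
    qed
    show "(\<lambda>l j. if j \<le> n then l!j else 0) ` ?Lst \<subseteq> ?Q"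
    proof
      fix x assume "x \<in> (\<lambda>l j. if j \<le> n then l!j else 0) ` ?Lst"
      then obtain l where l: "l \<in> ?Lst" "x = (\<lambda>j. if j \<le> n then l!j else 0)" by blast
      have "(\<Sum>j\<le>n. x j) = (\<Sum>j=0..<length l. l!j)"
        using l by (intro sum.cong) (auto simp: atLeast0LessThan lessThan_Suc_atMost[symmetric])
      also have "\<dots> = sum_list l" by (simp add: sum_list_sum_nth)
      finally show "x \<in> ?Q" using l by auto
    qed
  qed
  then have "card ?Q = card ?Lst" by (rule bij_betw_same_card)
  also have "\<dots> = (s + Suc n - 1) choose s" by (rule card_length_sum_list)
  also have "\<dots> = (s + n) choose n" using binomial_symmetric[of s "s+n"] by simp
  finally show ?thesis .
qed

theorem proposition3p2:
  fixes n M k l N N' L :: nat and m :: "nat \<Rightarrow> nat"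
  assumes pos: "\<forall>j\<in>{1..n}. m j \<ge> 1"
    and L_def: "L = Lcm (m ` {1..n})"
    and M_eq: "M = L * k + l" and l_lt: "l < L"
    and N_eq: "int ((n + 1) * L) - int (1 + (\<Sum>j=1..n. m j)) = int (L * N + N')"
    and N'_lt: "N' < L"
  shows "num_solutions n m M = (\<Sum>i=0..N. d_coeff n m L l i * ((n - i + k) choose n))"
proof -
  have mdvd: "m j dvd L" if "j \<in> {1..n}" for j
    using that L_def by (simp add: dvd_Lcm)
  have Lpos: "L > 0"
    using L_def pos Lcm_0_iff[of "m ` {1..n}"] by fastforce
  define w where "w j = (if j = 0 then L else L div m j)" for j
  define mm where "mm j = (if j = 0 then 1 else m j)" for j
  have mw: "mm j * w j = L" if "j \<le> n" for j
  proof (cases "j = 0")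
    case True then show ?thesis by (simp add: mm_def w_def)
  next
    case False
    then have "j \<in> {1..n}" using that by auto
    then show ?thesis using mdvd[of j] False by (simp add: mm_def w_def)
  qed
  have wpos: "w j > 0" if "j \<le> n" for j
    using mw[OF that] Lpos by (metis mult_0_right neq0_conv)
  have conv: "a 0 + (\<Sum>j=1..n. m j * a j) = (\<Sum>j\<le>n. mm j * a j)" for a
  proof -
    have "(\<Sum>j=1..n. mm j * a j) = (\<Sum>j=1..n. m j * a j)" by (rule sum.cong) (auto simp: mm_def)
    then show ?thesis using sum_split0[where f="\<lambda>j. mm j * a j" and n=n] by (simp add: mm_def)
  qed
  have Nsum: "(n + 1) * L = 1 + (\<Sum>j=1..n. m j) + (L * N + N')"
    using N_eq by linarith
  have summm: "(\<Sum>j\<le>n. mm j) = 1 + (\<Sum>j=1..n. m j)"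
  proof -
    have "(\<Sum>j=1..n. mm j) = (\<Sum>j=1..n. m j)" by (rule sum.cong) (auto simp: mm_def)
    then show ?thesis using sum_split0[where f=mm and n=n] by (simp add: mm_def)
  qed
  have NleN: "N \<le> n"
  proof -
    have "L * N < L * (n + 1)" using Nsum by (simp add: mult.commute)
    then have "N < n + 1" using Lpos mult_less_cancel1 by blast
    then show ?thesis by simp
  qed
  define r where "r a = (\<Sum>j\<le>n. mm j * (a j mod w j))" for a :: "nat \<Rightarrow> nat"
  define A where "A = {a :: nat \<Rightarrow> nat. (\<forall>j>n. a j = 0) \<and> a 0 + (\<Sum>j=1..n. m j * a j) = M}"
  define V where "V i = {v :: nat \<Rightarrow> nat. (\<forall>j>n. v j = 0) \<and> v 0 < L \<and> (\<forall>j\<in>{1..n}. v j < L div m j)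
            \<and> v 0 + (\<Sum>j=1..n. m j * v j) = L * i + l}" for i
  define Q where "Q i = {q :: nat \<Rightarrow> nat. (\<forall>j>n. q j = 0) \<and> (\<Sum>j\<le>n. q j) + i = k}" for i
  define f where "f a = (r a div L, (\<lambda>j. if j \<le> n then a j mod w j else 0),
                          (\<lambda>j. if j \<le> n then a j div w j else 0))" for a
  define g where "g x = (\<lambda>j. if j \<le> n then w j * snd (snd x) j + fst (snd x) j else 0)"
    for x :: "nat \<times> (nat \<Rightarrow> nat) \<times> (nat \<Rightarrow> nat)"
  have Vlt: "v j < w j" if "v \<in> V i" "j \<le> n" for v i j
    using that by (cases "j = 0") (auto simp: V_def w_def)
  have decomp: "(\<Sum>j\<le>n. mm j * a j) = L * (\<Sum>j\<le>n. a j div w j) + r a" for a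
  proof -
    have "(\<Sum>j\<le>n. mm j * a j) = (\<Sum>j\<le>n. L * (a j div w j) + mm j * (a j mod w j))"
    proof (rule sum.cong)
      fix j assume "j \<in> {..n}"
      then have "mm j * w j = L" using mw by auto
      then have "mm j * a j = mm j * (w j * (a j div w j) + a j mod w j)" by simp
      also have "\<dots> = L * (a j div w j) + mm j * (a j mod w j)"
        by (simp only: distrib_left mult.assoc[symmetric] \<open>mm j * w j = L\<close>)
      finally show "mm j * a j = L * (a j div w j) + mm j * (a j mod w j)" .
    qed simp
    also have "\<dots> = L * (\<Sum>j\<le>n. a j div w j) + r a"
      by (simp add: sum.distrib sum_distrib_left r_def)
    finally show ?thesis .
  qed
  have rbound: "r a \<le> L * N + N'" for a
  proof -
    have "r a + (\<Sum>j\<le>n. mm j) = (\<Sum>j\<le>n. mm j * (a j mod w j) + mm j)"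
      by (simp add: r_def sum.distrib)
    also have "\<dots> \<le> (\<Sum>j\<le>n. L)"
    proof (rule sum_mono)
      fix j assume "j \<in> {..n}"
      then have j: "j \<le> n" by simp
      have "a j mod w j + 1 \<le> w j" using wpos[OF j] by (simp add: Suc_leI)
      then have "mm j * (a j mod w j + 1) \<le> mm j * w j" by (rule mult_left_mono) simp
      then show "mm j * (a j mod w j) + mm j \<le> L" using mw[OF j] by (simp add: algebra_simps)
    qed
    also have "\<dots> = (n + 1) * L" by simp
    finally show ?thesis using Nsum summm by linarith
  qed
  have bij: "bij_betw f A (SIGMA i:{0..N}. V i \<times> Q i)"
  proof (rule bij_betw_byWitness[where f'=g])
    show "\<forall>a\<in>A. g (f a) = a"
    proof
      fix a assume "a \<in> A"
      then show "g (f a) = a" by (auto simp: g_def f_def A_def fun_eq_iff)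
    qed
    show "\<forall>x\<in>(SIGMA i:{0..N}. V i \<times> Q i). f (g x) = x"
    proof
      fix x assume x: "x \<in> (SIGMA i:{0..N}. V i \<times> Q i)"
      obtain i v q where xe: "x = (i, v, q)" by (cases x) auto
      have v: "v \<in> V i" and q: "q \<in> Q i" using x xe by auto
      have gm: "g x j mod w j = v j" "g x j div w j = q j" if "j \<le> n" for j
        using Vlt[OF v that] wpos[OF that] that by (simp_all add: g_def xe)
      have "r (g x) = (\<Sum>j\<le>n. mm j * v j)"
        unfolding r_def by (rule sum.cong) (auto simp: gm)
      also have "\<dots> = L * i + l" using v conv[of v] by (simp add: V_def)
      finally have "r (g x) div L = i" using l_lt by simp
      moreover have "(\<lambda>j. if j \<le> n then g x j mod w j else 0) = v"
        using v gm by (auto simp: fun_eq_iff V_def)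
      moreover have "(\<lambda>j. if j \<le> n then g x j div w j else 0) = q"
        using q gm by (auto simp: fun_eq_iff Q_def)
      ultimately show "f (g x) = x" unfolding f_def by (simp only: xe[symmetric])
    qed
    show "f ` A \<subseteq> (SIGMA i:{0..N}. V i \<times> Q i)"
    proof
      fix y assume "y \<in> f ` A"
      then obtain a where a: "a \<in> A" "y = f a" by blast
      define i where "i = r a div L"
      define qs where "qs = (\<Sum>j\<le>n. a j div w j)"
      have Meq: "L * qs + r a = L * k + l"
        using a decomp[of a] conv[of a] M_eq by (simp add: A_def qs_def)
      then have "(L * qs + r a) mod L = (L * k + l) mod L" by simp
      then have "r a mod L = l" using l_lt by simp
      then have ri: "r a = L * i + l" unfolding i_def by (metis div_mult_mod_eq mult.commute)
      have "L * (qs + i) = L * k" using Meq ri by (simp add: algebra_simps)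
      then have qi: "qs + i = k" using Lpos by simp
      have "L * i < L * Suc N" using rbound[of a] ri N'_lt by simp
      then have "i < Suc N" using Lpos mult_less_cancel1 by blast
      then have iN: "i \<le> N" by simp
      define v where "v = (\<lambda>j. if j \<le> n then a j mod w j else 0)"
      define q where "q = (\<lambda>j. if j \<le> n then a j div w j else 0)"
      have "(\<Sum>j\<le>n. mm j * v j) = r a" unfolding r_def v_def by (rule sum.cong) auto
      moreover have "a 0 mod L < L" using Lpos by simp
      moreover have "a j mod (L div m j) < L div m j" if "j \<in> {1..n}" for j
        using wpos[of j] that by (simp add: w_def)
      ultimately have "v \<in> V i"
        using conv[of v] ri by (auto simp: V_def v_def w_def)
      moreover have "q \<in> Q i"
        using qi by (auto simp: Q_def q_def qs_def)
      ultimately show "y \<in> (SIGMA i:{0..N}. V i \<times> Q i)"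
        using iN a by (simp add: f_def i_def v_def q_def)
    qed
    show "g ` (SIGMA i:{0..N}. V i \<times> Q i) \<subseteq> A"
    proof
      fix y assume "y \<in> g ` (SIGMA i:{0..N}. V i \<times> Q i)"
      then obtain x where x: "x \<in> (SIGMA i:{0..N}. V i \<times> Q i)" "y = g x" by blast
      obtain i v q where xe: "x = (i, v, q)" by (cases x) auto
      have v: "v \<in> V i" and q: "q \<in> Q i" using x xe by auto
      have gm: "g x j mod w j = v j" "g x j div w j = q j" if "j \<le> n" for j
        using Vlt[OF v that] wpos[OF that] that by (simp_all add: g_def xe)
      have "r (g x) = (\<Sum>j\<le>n. mm j * v j)"
        unfolding r_def by (rule sum.cong) (auto simp: gm)
      also have "\<dots> = L * i + l" using v conv[of v] by (simp add: V_def)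
      finally have rg: "r (g x) = L * i + l" .
      have "(\<Sum>j\<le>n. g x j div w j) = (\<Sum>j\<le>n. q j)" by (rule sum.cong) (auto simp: gm)
      then have "(\<Sum>j\<le>n. g x j div w j) + i = k" using q by (simp add: Q_def)
      then have "(\<Sum>j\<le>n. mm j * g x j) = M"
        using decomp[of "g x"] rg M_eq by (metis add.assoc distrib_left)
      then show "y \<in> A" using conv[of "g x"] x by (simp add: A_def g_def)
    qed
  qed
  have finV: "finite (V i)" for i
  proof (rule finite_subset)
    show "V i \<subseteq> {f. \<forall>x. (x \<in> {..n} \<longrightarrow> f x \<in> {..L}) \<and> (x \<notin> {..n} \<longrightarrow> f x = 0)}"
    proof
      fix v assume v: "v \<in> V i"
      have "v j \<le> L" if "j \<le> n" for j
      proof -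
        have "w j \<le> L" by (simp add: w_def)
        then show ?thesis using Vlt[OF v that] by simp
      qed
      then show "v \<in> {f. \<forall>x. (x \<in> {..n} \<longrightarrow> f x \<in> {..L}) \<and> (x \<notin> {..n} \<longrightarrow> f x = 0)}"
        using v by (auto simp: V_def)
    qed
  qed (rule finite_set_of_finite_funs; simp)
  have cardQ: "card (Q i) = (n - i + k) choose n" if "i \<le> n" for i
  proof (cases "i \<le> k")
    case True
    have "Q i = {q::nat\<Rightarrow>nat. (\<forall>j>n. q j = 0) \<and> (\<Sum>j\<le>n. q j) = k - i}"
      using True by (auto simp: Q_def)
    then have "card (Q i) = (k - i + n) choose n" by (simp add: Qcard)
    then show ?thesis using True that by (simp add: add.commute)
  next
    case False
    then have "Q i = {}" by (auto simp: Q_def)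
    moreover have "n - i + k < n" using False that by simp
    ultimately show ?thesis by simp
  qed
  have finQ: "finite (Q i)" if "i \<le> n" for i
  proof (cases "i \<le> k")
    case True
    then have "card (Q i) > 0" using cardQ[OF that] that by simp
    then show ?thesis using card_ge_0_finite by blast
  next
    case False
    then have "Q i = {}" by (auto simp: Q_def)
    then show ?thesis by simp
  qed
  have "num_solutions n m M = card A" by (simp add: num_solutions_def A_def)
  also have "\<dots> = card (SIGMA i:{0..N}. V i \<times> Q i)" by (rule bij_betw_same_card[OF bij])
  also have "\<dots> = (\<Sum>i=0..N. card (V i) * card (Q i))"
    using finV finQ NleN by (subst card_SigmaI) (auto simp: card_cartesian_product)
  also have "\<dots> = (\<Sum>i=0..N. d_coeff n m L l i * ((n - i + k) choose n))"
    using cardQ NleN by (intro sum.cong) (auto simp: d_coeff_def V_def)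
  finally show ?thesis .
qed
end
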